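(* Let $n\ge m\ge 2$ and let $\bm W\in\mathbb{R}^{m\times n}$ satisfy $\bm W\bm W^T=\bm I_m$ and $\bm\xi_m^T\bm W\bm\xi_n=1$. Let $\bm w_i^T$ denote the $i$-th row of $\bm W$, and define $\bm h_i:=\bm w_i-\operatorname{proj}_{\bm\xi_n}(\bm w_i)=\bm w_i-(\bm w_i^T\bm\xi_n)\bm\xi_n$ for $i=1,\dots,m$, and $\bm H=[\bm h_1\ \cdots\ \bm h_m]\in\mathbb{R}^{n\times m}$. Then for all $i,j\in\{1,\dots,m\}$, \[ (\bm H^T\bm H)_{ij}=\bm h_i^T\bm h_j=\begin{cases}\frac{m-1}{m}, & i=j,\\ -\frac1m, & i\ne j.\end{cases} \]
   Context: $\bm 1_k$ denotes the all-ones vector in $\mathbb{R}^k$ and $\bm\xi_k=\frac{1}{\sqrt k}\bm 1_k$. *)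

theory Defs
  imports "HOL-Analysis.Analysis"
begin

definition xi_vec :: "real ^ 'k" where
  "xi_vec = (\<chi> i. 1 / sqrt (real CARD('k)))"

text \<open>Orthogonal projection of v onto the span of the unit vector u.\<close>
definition proj_onto :: "real ^ 'k \<Rightarrow> real ^ 'k \<Rightarrow> real ^ 'k" where
  "proj_onto u v = (v \<bullet> u) *\<^sub>R u"

end

theory Submission
  imports Defs
begin

lemma xi_norm: "(xi_vec :: real ^ 'k) \<bullet> xi_vec = 1"
proof -
  have "(xi_vec :: real ^ 'k) \<bullet> xi_vec = (\<Sum>i\<in>(UNIV::'k set). (1 / sqrt (real CARD('k)))^2)"
    by (simp add: xi_vec_def inner_vec_def power2_eq_square)
  also have "\<dots> = 1" by (simp add: power_divide)
  finally show ?thesis .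
qed

theorem proposition2:
  fixes W :: "real ^ 'n ^ 'm"
    and H :: "real ^ 'm ^ 'n"
  assumes "CARD('n) \<ge> CARD('m)" and "CARD('m) \<ge> 2"
    and "W ** transpose W = mat 1"
    and "(xi_vec :: real ^ 'm) \<bullet> (W *v (xi_vec :: real ^ 'n)) = 1"
    and "\<forall>i. column i H = W $ i - proj_onto (xi_vec :: real ^ 'n) (W $ i)"
  shows "\<forall>i j. (transpose H ** H) $ i $ j = column i H \<bullet> column j H
           \<and> (transpose H ** H) $ i $ j =
               (if i = j then (real CARD('m) - 1) / real CARD('m) else - 1 / real CARD('m))"
proof -
  define x where "x = (xi_vec :: real ^ 'n)"
  define e where "e = (xi_vec :: real ^ 'm)"
  define y where "y = W *v x"
  have xx: "x \<bullet> x = 1" unfolding x_def by (rule xi_norm)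
  have ee: "e \<bullet> e = 1" unfolding e_def by (rule xi_norm)
  have ey: "e \<bullet> y = 1" using assms(4) unfolding e_def y_def x_def .
  have orth: "W $ i \<bullet> W $ j = (if i = j then 1 else 0)" for i j
  proof -
    have "(W ** transpose W) $ i $ j = row i W \<bullet> row j W"
      by (simp add: matrix_mult_transpose_dot_row)
    moreover have "row i W = W $ i" for i by (simp add: row_def vec_eq_iff)
    ultimately show ?thesis using assms(3) by (simp add: mat_def)
  qed
  have WWt: "W *v (transpose W *v y) = y"
    by (simp only: matrix_vector_mul_assoc assms(3) matrix_vector_mul_lid)
  have yy1: "y \<bullet> y \<le> 1"
  proof -
    define z where "z = transpose W *v y"
    have zz: "z \<bullet> z = y \<bullet> y"
    proof -
      have "z \<bullet> z = (y v* W) \<bullet> z" by (simp add: z_def vector_transpose_matrix)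
      also have "\<dots> = y \<bullet> (W *v z)" by (rule dot_lmul_matrix)
      finally show ?thesis using WWt z_def by simp
    qed
    have yz: "y \<bullet> y = z \<bullet> x"
    proof -
      have "z \<bullet> x = (y v* W) \<bullet> x" by (simp add: z_def vector_transpose_matrix)
      also have "\<dots> = y \<bullet> y" by (simp add: dot_lmul_matrix y_def)
      finally show ?thesis by simp
    qed
    have "z \<bullet> x \<le> norm z * norm x" by (rule norm_cauchy_schwarz)
    hence t: "y \<bullet> y \<le> sqrt (y \<bullet> y)"
      using zz yz xx by (simp add: norm_eq_sqrt_inner)
    have "(y \<bullet> y)^2 \<le> (sqrt (y \<bullet> y))^2"
      using t by (intro power_mono) auto
    hence "(y \<bullet> y) * (y \<bullet> y) \<le> (y \<bullet> y) * 1" by (simp add: power2_eq_square)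
    thus ?thesis by (metis inner_ge_zero less_le_not_le mult_strict_left_mono not_le zero_less_one less_le_trans)
  qed
  have "(e - y) \<bullet> (e - y) = 0"
  proof -
    have "(e - y) \<bullet> (e - y) = e \<bullet> e - 2 * (e \<bullet> y) + y \<bullet> y"
      by (simp add: inner_diff_left inner_diff_right inner_commute)
    hence "(e - y) \<bullet> (e - y) \<le> 0" using ee ey yy1 by simp
    thus ?thesis by (meson inner_ge_zero order_antisym)
  qed
  hence ye: "y = e" by simp
  have a: "W $ i \<bullet> x = 1 / sqrt (real CARD('m))" for i
  proof -
    have "y $ i = W $ i \<bullet> x" by (simp add: y_def matrix_mult_dot)
    thus ?thesis using ye by (simp add: e_def xi_vec_def)
  qed
  have m0: "real CARD('m) > 0" by simp
  have col: "column i H \<bullet> column j H = (if i = j then (real CARD('m) - 1) / real CARD('m) else - 1 / real CARD('m))" for i j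
  proof -
    have "column i H \<bullet> column j H = (W $ i - (W $ i \<bullet> x) *\<^sub>R x) \<bullet> (W $ j - (W $ j \<bullet> x) *\<^sub>R x)"
      using assms(5) by (simp add: proj_onto_def x_def)
    also have "\<dots> = W $ i \<bullet> W $ j - (W $ i \<bullet> x) * (W $ j \<bullet> x)"
      using xx by (simp add: inner_diff_left inner_diff_right inner_commute algebra_simps)
    also have "\<dots> = (if i = j then 1 else 0) - 1 / real CARD('m)"
      using a orth m0 by (simp add: power2_eq_square[symmetric] power_divide)
    finally show ?thesis using m0 by (cases "i = j") (simp_all add: field_simps)
  qed
  show ?thesis using col by (simp add: matrix_mult_transpose_dot_column)
qed

end
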